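(* Let $\mathcal R$ be a species of tree on $T_0=\{1,\dots,n\}$. (i) The $\mathbf Q$-vector space with basis $\{A(T):T\in\mathcal R\}$ is a commutative $\mathbf Q$-algebra consisting of symmetric, diagonalizable magic matrices of sum zero. (ii) The $\mathbf Q$-vector space with basis $\{I\}\cup\{A(T):T\in\mathcal R\}$ is a commutative $\mathbf Q$-algebra of symmetric, diagonalizable magic matrices. (In particular these families are linearly independent.)
   Context: A species of tree is a family $\mathcal R$ of subsets of $T_0$ containing $T_0$, each of cardinality $\ge 2$, any two of which are either disjoint or nested. For $T\subset T_0$ of cardinality $n(T)\ge2$, $A(T)=(\alpha_{i,j})$ is the $n\times n$ matrix with $\alpha_{i,j}=-1$ if $i\ne j$ and $\{i,j\}\subset T$, $\alpha_{i,i}=n(T)-1$ if $i\in T$, and $0$ otherwise. A matrix is magic if all its row and column sums are equal (its sum). $I$ is the identity. *)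

theory Defs
  imports "Jordan_Normal_Form.Matrix"
begin

text \<open>Ground set T0 = {0..<n} (0-based indices; the paper uses {1..n}).\<close>

definition species_of_tree :: "nat \<Rightarrow> nat set set \<Rightarrow> bool" where
  "species_of_tree n R \<longleftrightarrow>
     (\<forall>T\<in>R. T \<subseteq> {0..<n}) \<and> {0..<n} \<in> R \<and> (\<forall>T\<in>R. card T \<ge> 2) \<and>
     (\<forall>S\<in>R. \<forall>T\<in>R. S \<inter> T = {} \<or> S \<subseteq> T \<or> T \<subseteq> S)"

definition A_mat :: "nat \<Rightarrow> nat set \<Rightarrow> rat mat" where
  "A_mat n T = mat n n (\<lambda>(i,j).
      if i \<in> T \<and> j \<in> T then (if i = j then of_nat (card T) - 1 else -1) else 0)"

definition magic_with_sum :: "nat \<Rightarrow> rat mat \<Rightarrow> rat \<Rightarrow> bool" where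
  "magic_with_sum n M s \<longleftrightarrow> M \<in> carrier_mat n n \<and>
     (\<forall>i<n. (\<Sum>j<n. M $$ (i,j)) = s) \<and> (\<forall>j<n. (\<Sum>i<n. M $$ (i,j)) = s)"

definition magic :: "nat \<Rightarrow> rat mat \<Rightarrow> bool" where
  "magic n M \<longleftrightarrow> (\<exists>s. magic_with_sum n M s)"

definition symmetric_mat :: "rat mat \<Rightarrow> bool" where
  "symmetric_mat M \<longleftrightarrow> transpose_mat M = M"

definition diagonalizable :: "rat mat \<Rightarrow> bool" where
  "diagonalizable M \<longleftrightarrow> (\<exists>D. diagonal_mat D \<and> similar_mat M D)"

definition lincomb :: "nat \<Rightarrow> ('k \<Rightarrow> rat mat) \<Rightarrow> 'k set \<Rightarrow> ('k \<Rightarrow> rat) \<Rightarrow> rat mat" where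
  "lincomb n f K c = mat n n (\<lambda>(i,j). \<Sum>k\<in>K. c k * (f k $$ (i,j)))"

definition span_mat :: "nat \<Rightarrow> ('k \<Rightarrow> rat mat) \<Rightarrow> 'k set \<Rightarrow> rat mat set" where
  "span_mat n f K = {lincomb n f K c | c. True}"

definition lin_indep_mat :: "nat \<Rightarrow> ('k \<Rightarrow> rat mat) \<Rightarrow> 'k set \<Rightarrow> bool" where
  "lin_indep_mat n f K \<longleftrightarrow> (\<forall>c. lincomb n f K c = 0\<^sub>m n n \<longrightarrow> (\<forall>k\<in>K. c k = 0))"

definition comm_subalgebra :: "rat mat set \<Rightarrow> bool" where
  "comm_subalgebra V \<longleftrightarrow> (\<forall>M\<in>V. \<forall>N\<in>V. M * N \<in> V \<and> M * N = N * M)"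

definition I_or_A :: "nat \<Rightarrow> nat set option \<Rightarrow> rat mat" where
  "I_or_A n x = (case x of None \<Rightarrow> 1\<^sub>m n | Some T \<Rightarrow> A_mat n T)"

end

theory Submission
  imports Defs "Jordan_Normal_Form.Determinant"
begin


lemma diag_from_orth:
  fixes M :: "rat mat" and v :: "nat \<Rightarrow> nat \<Rightarrow> rat" and lam :: "nat \<Rightarrow> rat"
  assumes M: "M \<in> carrier_mat n n"
  and orth: "\<And>k l. k < n \<Longrightarrow> l < n \<Longrightarrow> k \<noteq> l \<Longrightarrow> (\<Sum>i<n. v k i * v l i) = 0"
  and nz: "\<And>k. k < n \<Longrightarrow> (\<Sum>i<n. v k i * v k i) \<noteq> 0"
  and eig: "\<And>k i. k < n \<Longrightarrow> i < n \<Longrightarrow> (\<Sum>j<n. M $$ (i,j) * v k j) = lam k * v k i"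
  shows "diagonalizable M"
proof -
  define P where "P = mat n n (\<lambda>(i,k). v k i)"
  define Q where "Q = mat n n (\<lambda>(k,i). v k i / (\<Sum>j<n. v k j * v k j))"
  define D where "D = mat n n (\<lambda>(k,l). if k = l then lam k else 0)"
  have P: "P \<in> carrier_mat n n" and Q: "Q \<in> carrier_mat n n" and D: "D \<in> carrier_mat n n"
    by (auto simp: P_def Q_def D_def)
  have QP: "Q * P = 1\<^sub>m n"
  proof (rule eq_matI)
    fix k l assume k: "k < dim_row (1\<^sub>m n :: rat mat)" and l: "l < dim_col (1\<^sub>m n :: rat mat)"
    hence k: "k < n" and l: "l < n" by auto
    have "(Q * P) $$ (k,l) = (\<Sum>i<n. v k i / (\<Sum>j<n. v k j * v k j) * v l i)"
      using k l by (simp add: Q_def P_def scalar_prod_def lessThan_atLeast0)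
    also have "\<dots> = (\<Sum>i<n. v k i * v l i) / (\<Sum>j<n. v k j * v k j)"
      by (simp add: sum_divide_distrib)
    also have "\<dots> = (1\<^sub>m n :: rat mat) $$ (k,l)"
      using k l orth[of k l] nz[of k] by auto
    finally show "(Q * P) $$ (k,l) = (1\<^sub>m n :: rat mat) $$ (k,l)" .
  qed (auto simp: Q_def P_def)
  have PQ: "P * Q = 1\<^sub>m n" by (rule mat_mult_left_right_inverse[OF Q P QP])
  have MP: "M * P = P * D"
  proof (rule eq_matI)
    fix i k assume i: "i < dim_row (P * D)" and k: "k < dim_col (P * D)"
    hence i: "i < n" and k: "k < n" using P D by auto
    have "(M * P) $$ (i,k) = (\<Sum>j<n. M $$ (i,j) * v k j)"
      using i k M by (simp add: P_def scalar_prod_def lessThan_atLeast0)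
    also have "\<dots> = lam k * v k i" using eig i k by simp
    also have "\<dots> = (\<Sum>l<n. v l i * (if l = k then lam l else 0))"
      using k by (simp add: if_distrib[where f="\<lambda>x. _ * x"] sum.delta cong: if_cong)
    also have "\<dots> = (P * D) $$ (i,k)"
      using i k by (simp add: P_def D_def scalar_prod_def lessThan_atLeast0)
    finally show "(M * P) $$ (i,k) = (P * D) $$ (i,k)" .
  qed (use M P D in auto)
  have "M = M * (P * Q)" using M by (simp add: PQ)
  also have "\<dots> = M * P * Q" using M P Q by (simp add: assoc_mult_mat)
  also have "\<dots> = P * D * Q" by (simp add: MP)
  finally have "M = P * D * Q" .
  hence "similar_mat M D" using similar_matI[of M D P Q n] M P Q D PQ QP by auto
  moreover have "diagonal_mat D" by (auto simp: diagonal_mat_def D_def)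
  ultimately show ?thesis unfolding diagonalizable_def by blast
qed


lemma lincomb_carrier[simp]: "lincomb n f K c \<in> carrier_mat n n"
  by (simp add: lincomb_def)
lemma lincomb_dims[simp]: "dim_row (lincomb n f K c) = n" "dim_col (lincomb n f K c) = n"
  by (simp_all add: lincomb_def)
lemma lincomb_index[simp]: "i < n \<Longrightarrow> j < n \<Longrightarrow> lincomb n f K c $$ (i,j) = (\<Sum>k\<in>K. c k * f k $$ (i,j))"
  by (simp add: lincomb_def)

lemma lincomb_symmetric:
  assumes "\<And>k i j. k \<in> K \<Longrightarrow> i < n \<Longrightarrow> j < n \<Longrightarrow> f k $$ (i,j) = f k $$ (j,i)"
  shows "symmetric_mat (lincomb n f K c)"
  unfolding symmetric_mat_def
  by (rule eq_matI) (auto simp: assms intro!: sum.cong)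

lemma lincomb_magic:
  assumes "\<And>k. k \<in> K \<Longrightarrow> magic_with_sum n (f k) (s k)"
  shows "magic_with_sum n (lincomb n f K c) (\<Sum>k\<in>K. c k * s k)"
proof -
  have row: "(\<Sum>j<n. lincomb n f K c $$ (i,j)) = (\<Sum>k\<in>K. c k * s k)" if i: "i < n" for i
  proof -
    have "(\<Sum>j<n. lincomb n f K c $$ (i,j)) = (\<Sum>j<n. \<Sum>k\<in>K. c k * f k $$ (i,j))"
      using i by simp
    also have "\<dots> = (\<Sum>k\<in>K. c k * (\<Sum>j<n. f k $$ (i,j)))"
      by (subst sum.swap) (simp add: sum_distrib_left)
    also have "\<dots> = (\<Sum>k\<in>K. c k * s k)"
      using assms i unfolding magic_with_sum_def by (intro sum.cong) auto
    finally show ?thesis .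
  qed
  have col: "(\<Sum>i<n. lincomb n f K c $$ (i,j)) = (\<Sum>k\<in>K. c k * s k)" if j: "j < n" for j
  proof -
    have "(\<Sum>i<n. lincomb n f K c $$ (i,j)) = (\<Sum>i<n. \<Sum>k\<in>K. c k * f k $$ (i,j))"
      using j by simp
    also have "\<dots> = (\<Sum>k\<in>K. c k * (\<Sum>i<n. f k $$ (i,j)))"
      by (subst sum.swap) (simp add: sum_distrib_left)
    also have "\<dots> = (\<Sum>k\<in>K. c k * s k)"
      using assms j unfolding magic_with_sum_def by (intro sum.cong) auto
    finally show ?thesis .
  qed
  show ?thesis unfolding magic_with_sum_def using row col by simp
qed

lemma lincomb_eigen:
  assumes "\<And>k i. k \<in> K \<Longrightarrow> i < n \<Longrightarrow> (\<Sum>j<n. f k $$ (i,j) * v j) = mu k * v i"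
  and i: "i < n"
  shows "(\<Sum>j<n. lincomb n f K c $$ (i,j) * v j) = (\<Sum>k\<in>K. c k * mu k) * v i"
proof -
  have "(\<Sum>j<n. lincomb n f K c $$ (i,j) * v j) = (\<Sum>j<n. \<Sum>k\<in>K. c k * f k $$ (i,j) * v j)"
    using i by (simp add: sum_distrib_right)
  also have "\<dots> = (\<Sum>k\<in>K. c k * (\<Sum>j<n. f k $$ (i,j) * v j))"
    by (subst sum.swap) (simp add: sum_distrib_left mult.assoc)
  also have "\<dots> = (\<Sum>k\<in>K. c k * mu k * v i)"
    using assms i by (intro sum.cong) auto
  finally show ?thesis by (simp add: sum_distrib_right)
qed

lemma lincomb_mult:
  assumes fin: "finite K"
  and prod: "\<And>x y i j. x \<in> K \<Longrightarrow> y \<in> K \<Longrightarrow> i < n \<Longrightarrow> j < n \<Longrightarrow>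
     (\<Sum>l<n. f x $$ (i,l) * f y $$ (l,j)) = (\<Sum>z\<in>K. g x y z * f z $$ (i,j))"
  shows "lincomb n f K c * lincomb n f K d = lincomb n f K (\<lambda>z. \<Sum>x\<in>K. \<Sum>y\<in>K. c x * d y * g x y z)"
proof (rule eq_matI)
  fix i j assume "i < dim_row (lincomb n f K (\<lambda>z. \<Sum>x\<in>K. \<Sum>y\<in>K. c x * d y * g x y z))"
    "j < dim_col (lincomb n f K (\<lambda>z. \<Sum>x\<in>K. \<Sum>y\<in>K. c x * d y * g x y z))"
  hence i: "i < n" and j: "j < n" by auto
  have "(lincomb n f K c * lincomb n f K d) $$ (i,j) =
     (\<Sum>l<n. (\<Sum>x\<in>K. c x * f x $$ (i,l)) * (\<Sum>y\<in>K. d y * f y $$ (l,j)))"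
    using i j by (simp add: scalar_prod_def lessThan_atLeast0)
  also have "\<dots> = (\<Sum>l<n. \<Sum>x\<in>K. \<Sum>y\<in>K. c x * d y * (f x $$ (i,l) * f y $$ (l,j)))"
    by (simp add: sum_product mult_ac)
  also have "\<dots> = (\<Sum>x\<in>K. \<Sum>y\<in>K. c x * d y * (\<Sum>l<n. f x $$ (i,l) * f y $$ (l,j)))"
    by (simp add: sum_distrib_left) (subst sum.swap, simp add: sum_distrib_left mult_ac, subst sum.swap, simp)
  also have "\<dots> = (\<Sum>x\<in>K. \<Sum>y\<in>K. c x * d y * (\<Sum>z\<in>K. g x y z * f z $$ (i,j)))"
    using prod i j by (intro sum.cong refl) auto
  also have "\<dots> = (\<Sum>z\<in>K. (\<Sum>x\<in>K. \<Sum>y\<in>K. c x * d y * g x y z) * f z $$ (i,j))"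
  proof -
    have "(\<Sum>x\<in>K. \<Sum>y\<in>K. c x * d y * (\<Sum>z\<in>K. g x y z * f z $$ (i,j)))
       = (\<Sum>x\<in>K. \<Sum>z\<in>K. \<Sum>y\<in>K. c x * d y * g x y z * f z $$ (i,j))"
      by (rule sum.cong[OF refl], subst sum.swap) (simp add: sum_distrib_left mult_ac)
    also have "\<dots> = (\<Sum>z\<in>K. \<Sum>x\<in>K. \<Sum>y\<in>K. c x * d y * g x y z * f z $$ (i,j))"
      by (rule sum.swap)
    also have "\<dots> = (\<Sum>z\<in>K. (\<Sum>x\<in>K. \<Sum>y\<in>K. c x * d y * g x y z) * f z $$ (i,j))"
      by (simp add: sum_distrib_right)
    finally show ?thesis .
  qed
  also have "\<dots> = lincomb n f K (\<lambda>z. \<Sum>x\<in>K. \<Sum>y\<in>K. c x * d y * g x y z) $$ (i,j)"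
    using i j by simp
  finally show "(lincomb n f K c * lincomb n f K d) $$ (i,j) = lincomb n f K (\<lambda>z. \<Sum>x\<in>K. \<Sum>y\<in>K. c x * d y * g x y z) $$ (i,j)" .
qed auto

lemma lincomb_comm_subalgebra:
  assumes fin: "finite K"
  and prod: "\<And>x y i j. x \<in> K \<Longrightarrow> y \<in> K \<Longrightarrow> i < n \<Longrightarrow> j < n \<Longrightarrow>
     (\<Sum>l<n. f x $$ (i,l) * f y $$ (l,j)) = (\<Sum>z\<in>K. g x y z * f z $$ (i,j))"
  and gsym: "\<And>x y z. x \<in> K \<Longrightarrow> y \<in> K \<Longrightarrow> g x y z = g y x z"
  shows "comm_subalgebra (span_mat n f K)"
  unfolding comm_subalgebra_def span_mat_def
proof (intro ballI)
  fix M N assume "M \<in> {lincomb n f K c |c. True}" "N \<in> {lincomb n f K c |c. True}"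
  then obtain c d where M: "M = lincomb n f K c" and N: "N = lincomb n f K d" by auto
  have MN: "M * N = lincomb n f K (\<lambda>z. \<Sum>x\<in>K. \<Sum>y\<in>K. c x * d y * g x y z)"
    unfolding M N by (rule lincomb_mult[OF fin prod])
  have NM: "N * M = lincomb n f K (\<lambda>z. \<Sum>x\<in>K. \<Sum>y\<in>K. d x * c y * g x y z)"
    unfolding M N by (rule lincomb_mult[OF fin prod])
  have "(\<lambda>z. \<Sum>x\<in>K. \<Sum>y\<in>K. d x * c y * g x y z) = (\<lambda>z. \<Sum>x\<in>K. \<Sum>y\<in>K. c x * d y * g x y z)"
  proof
    fix z
    have "(\<Sum>x\<in>K. \<Sum>y\<in>K. d x * c y * g x y z) = (\<Sum>y\<in>K. \<Sum>x\<in>K. d x * c y * g x y z)"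
      by (rule sum.swap)
    also have "\<dots> = (\<Sum>y\<in>K. \<Sum>x\<in>K. c y * d x * g y x z)"
      using gsym by (intro sum.cong refl) (auto simp: mult_ac)
    finally show "(\<Sum>x\<in>K. \<Sum>y\<in>K. d x * c y * g x y z) = (\<Sum>x\<in>K. \<Sum>y\<in>K. c x * d y * g x y z)" .
  qed
  with MN NM show "M * N \<in> {lincomb n f K c |c. True} \<and> M * N = N * M" by auto
qed


lemma A_index[simp]: "i < n \<Longrightarrow> j < n \<Longrightarrow> A_mat n T $$ (i,j) =
  (if i \<in> T \<and> j \<in> T then (if i = j then of_nat (card T) - 1 else -1) else 0)"
  by (simp add: A_mat_def)
lemma A_carrier[simp]: "A_mat n T \<in> carrier_mat n n" by (simp add: A_mat_def)
lemma A_dims[simp]: "dim_row (A_mat n T) = n" "dim_col (A_mat n T) = n" by (simp_all add: A_mat_def)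

lemma A_action:
  assumes T: "T \<subseteq> {..<n}" and i: "i < n"
  shows "(\<Sum>j<n. A_mat n T $$ (i,j) * v j) = (if i \<in> T then of_nat (card T) * v i - (\<Sum>j\<in>T. v j) else 0)"
proof (cases "i \<in> T")
  case False thus ?thesis using i by simp
next
  case True
  have fT: "finite T" using T finite_subset by blast
  have "(\<Sum>j<n. A_mat n T $$ (i,j) * v j) = (\<Sum>j<n. if j \<in> T then (if i = j then of_nat (card T) - 1 else -1) * v j else 0)"
    using i True by (intro sum.cong) auto
  also have "\<dots> = (\<Sum>j\<in>{..<n} \<inter> T. (if i = j then of_nat (card T) - 1 else -1) * v j)"
    by (rule sum.inter_restrict[symmetric]) simp
  also have "{..<n} \<inter> T = T" using T by auto
  also have "(\<Sum>j\<in>T. (if i = j then of_nat (card T) - 1 else -1) * v j) = (\<Sum>j\<in>T. (if i = j then of_nat (card T) * v j else 0) - v j)"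
    by (intro sum.cong) (auto simp: algebra_simps)
  also have "\<dots> = of_nat (card T) * v i - (\<Sum>j\<in>T. v j)"
    using True fT by (simp add: sum_subtractf)
  finally show ?thesis using True by simp
qed

lemma A_colsum:
  assumes T: "T \<subseteq> {..<n}" and j: "j < n"
  shows "(\<Sum>l\<in>T. A_mat n S $$ (l,j)) = (if j \<in> S then (if j \<in> T then of_nat (card S) else 0) - of_nat (card (T \<inter> S)) else 0)"
proof (cases "j \<in> S")
  case False
  have "(\<Sum>l\<in>T. A_mat n S $$ (l,j)) = 0" using T j False by (intro sum.neutral) auto
  thus ?thesis using False by simp
next
  case True
  have fT: "finite T" using T finite_subset by blast
  have "(\<Sum>l\<in>T. A_mat n S $$ (l,j)) = (\<Sum>l\<in>T. if l \<in> S then (if l = j then of_nat (card S) else 0) - 1 else 0)"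
    using T j True by (intro sum.cong) auto
  also have "\<dots> = (\<Sum>l\<in>T \<inter> S. (if l = j then of_nat (card S) else 0) - 1)"
    by (rule sum.inter_restrict[symmetric]) (rule fT)
  also have "\<dots> = (if j \<in> T then of_nat (card S) else 0) - of_nat (card (T \<inter> S))"
    using True fT by (simp add: sum_subtractf)
  finally show ?thesis using True by simp
qed

lemma A_prod:
  assumes T: "T \<subseteq> {..<n}" and S: "S \<subseteq> {..<n}" and i: "i < n" and j: "j < n"
  and lam: "T \<inter> S = {} \<or> T \<subseteq> S \<or> S \<subseteq> T"
  shows "(\<Sum>l<n. A_mat n T $$ (i,l) * A_mat n S $$ (l,j)) =
    (if T \<subseteq> S then of_nat (card S) * A_mat n T $$ (i,j) else if S \<subseteq> T then of_nat (card T) * A_mat n S $$ (i,j) else 0)"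
proof -
  have "(\<Sum>l<n. A_mat n T $$ (i,l) * A_mat n S $$ (l,j)) =
     (if i \<in> T then of_nat (card T) * A_mat n S $$ (i,j) - (\<Sum>l\<in>T. A_mat n S $$ (l,j)) else 0)"
    by (rule A_action[OF T i])
  also have "\<dots> = (if i \<in> T then of_nat (card T) * A_mat n S $$ (i,j) -
      (if j \<in> S then (if j \<in> T then of_nat (card S) else 0) - of_nat (card (T \<inter> S)) else 0) else 0)"
    by (simp add: A_colsum[OF T j])
  also have "\<dots> = (if T \<subseteq> S then of_nat (card S) * A_mat n T $$ (i,j) else if S \<subseteq> T then of_nat (card T) * A_mat n S $$ (i,j) else 0)"
  proof -
    consider "T \<subseteq> S" | "\<not> T \<subseteq> S" "S \<subseteq> T" | "\<not> T \<subseteq> S" "\<not> S \<subseteq> T" "T \<inter> S = {}" using lam by blast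
    thus ?thesis
    proof cases
      case 1
      hence "T \<inter> S = T" by auto
      thus ?thesis using 1 i j by (auto simp: algebra_simps)
    next
      case 2
      hence "T \<inter> S = S" by auto
      thus ?thesis using 2 i j by (auto simp: algebra_simps)
    next
      case 3
      thus ?thesis using i j by auto
    qed
  qed
  finally show ?thesis .
qed


locale sp =
  fixes n :: nat and R :: "nat set set"
  assumes sp: "species_of_tree n R"
begin

lemma sub: "T \<in> R \<Longrightarrow> T \<subseteq> {..<n}"
proof -
  assume T: "T \<in> R"
  have "\<forall>T\<in>R. T \<subseteq> {0..<n}" using sp by (simp add: species_of_tree_def)
  thus ?thesis using T by (simp add: atLeast0LessThan)
qed
lemma top: "{..<n} \<in> R" using sp unfolding species_of_tree_def by (auto simp: lessThan_atLeast0)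
lemma card2: "T \<in> R \<Longrightarrow> card T \<ge> 2" using sp unfolding species_of_tree_def by auto
lemma lam: "S \<in> R \<Longrightarrow> T \<in> R \<Longrightarrow> S \<inter> T = {} \<or> S \<subseteq> T \<or> T \<subseteq> S"
  using sp unfolding species_of_tree_def by auto
lemma finT: "T \<in> R \<Longrightarrow> finite T" using sub finite_subset by blast
lemma finR: "finite R"
proof -
  have "R \<subseteq> Pow {..<n}" using sub by auto
  thus ?thesis by (rule finite_subset) simp
qed
lemma n2: "n \<ge> 2" using card2[OF top] by simp

lemma lam_int: "S \<in> R \<Longrightarrow> T \<in> R \<Longrightarrow> x \<in> S \<Longrightarrow> x \<in> T \<Longrightarrow> S \<subseteq> T \<or> T \<subseteq> S"
  using lam by blast

definition ch :: "nat set \<Rightarrow> nat \<Rightarrow> nat set" where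
  "ch S j = \<Union>{U\<in>R. j \<in> U \<and> U \<subset> S} \<union> {j}"

lemma ch_cases:
  assumes "S \<in> R"
  shows "ch S j = {j} \<or> (ch S j \<in> R \<and> j \<in> ch S j \<and> ch S j \<subset> S)"
proof (cases "{U\<in>R. j \<in> U \<and> U \<subset> S} = {}")
  case True thus ?thesis unfolding ch_def True by simp
next
  case False
  let ?F = "{U\<in>R. j \<in> U \<and> U \<subset> S}"
  have fin: "finite ?F" using finR by simp
  have "\<exists>m\<in>?F. \<forall>b\<in>?F. m \<le> b \<longrightarrow> m = b" by (rule finite_has_maximal[OF fin False])
  then obtain m where m: "m \<in> ?F" and mx0: "\<forall>b\<in>?F. m \<le> b \<longrightarrow> m = b" by (rule bexE)
  have mx: "m = b" if "b \<in> ?F" "m \<subseteq> b" for b using mx0 that by blast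
  have mR: "m \<in> R" and jm: "j \<in> m" and mS: "m \<subset> S" using m by simp_all
  have bm: "b \<subseteq> m" if b: "b \<in> ?F" for b
  proof -
    have bR: "b \<in> R" and jb: "j \<in> b" using b by auto
    have "b \<subseteq> m \<or> m \<subseteq> b" by (rule lam_int[OF bR mR jb jm])
    thus "b \<subseteq> m" using mx[OF b] by blast
  qed
  have "\<Union>?F = m"
  proof (rule antisym)
    show "\<Union>?F \<subseteq> m" by (rule Union_least) (rule bm)
    show "m \<subseteq> \<Union>?F" by (rule Union_upper[OF m])
  qed
  hence e: "ch S j = m" using jm unfolding ch_def by blast
  show ?thesis using e mR jm mS by simp
qed

lemma ch_mem: "j \<in> ch S j" by (simp add: ch_def)

lemma ch_sub: "S \<in> R \<Longrightarrow> j \<in> S \<Longrightarrow> ch S j \<subset> S"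
proof (cases "ch S j = {j}")
  case True
  assume S: "S \<in> R" and j: "j \<in> S"
  have "S \<noteq> {j}" using card2[OF S] by auto
  thus ?thesis using True j by auto
next
  case False
  assume S: "S \<in> R" and j: "j \<in> S"
  thus ?thesis using ch_cases[OF S, of j] False by blast
qed

lemma ch_max: "U \<in> R \<Longrightarrow> j \<in> U \<Longrightarrow> U \<subset> S \<Longrightarrow> U \<subseteq> ch S j"
  by (auto simp: ch_def)

lemma ch_eq:
  assumes S: "S \<in> R" and j: "j \<in> S" and j': "j' \<in> ch S j"
  shows "ch S j' = ch S j"
proof (cases "ch S j = {j}")
  case True thus ?thesis using j' by simp
next
  case False
  hence X: "ch S j \<in> R" "ch S j \<subset> S" using ch_cases[OF S, of j] by auto
  have 1: "ch S j \<subseteq> ch S j'" using ch_max[OF X(1) j' X(2)] .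
  have "ch S j' \<subseteq> ch S j"
  proof (cases "ch S j' = {j'}")
    case True thus ?thesis using j' by simp
  next
    case False
    hence Y: "ch S j' \<in> R" "ch S j' \<subset> S" "j' \<in> ch S j'" using ch_cases[OF S, of j'] by auto
    have "j \<in> ch S j'" using 1 ch_mem[of j S] by auto
    thus ?thesis using ch_max[OF Y(1) _ Y(2)] by blast
  qed
  with 1 show ?thesis by auto
qed

lemma ch_const:
  assumes S: "S \<in> R" and T: "T \<in> R" "T \<subset> S" and j: "j \<in> T" and j': "j' \<in> T"
  shows "ch S j' = ch S j"
proof -
  have "T \<subseteq> ch S j" by (rule ch_max[OF T(1) j T(2)])
  hence "j' \<in> ch S j" using j' by auto
  moreover have "j \<in> S" using T(2) j by auto
  ultimately show ?thesis using ch_eq[OF S] by blast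
qed

end


lemma orth_aux:
  fixes a b :: "nat \<Rightarrow> rat"
  assumes "(\<Sum>j<n. a j) = 0" and "\<And>j. j < n \<Longrightarrow> a j \<noteq> 0 \<Longrightarrow> b j = c"
  shows "(\<Sum>j<n. a j * b j) = 0"
proof -
  have "(\<Sum>j<n. a j * b j) = (\<Sum>j<n. a j * c)"
    using assms(2) by (intro sum.cong) auto
  also have "\<dots> = 0" using assms(1) by (simp add: sum_distrib_right[symmetric])
  finally show ?thesis .
qed

context sp begin

definition Gk :: "nat \<Rightarrow> nat set set" where
  "Gk k = {T\<in>R. k \<in> T \<and> (\<exists>j<k. j \<in> T)}"

definition Sk :: "nat \<Rightarrow> nat set" where
  "Sk k = (SOME S. S \<in> Gk k \<and> (\<forall>b\<in>Gk k. b \<subseteq> S \<longrightarrow> b = S))"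

lemma Sk_prop:
  assumes k: "0 < k" "k < n"
  shows "Sk k \<in> R" "k \<in> Sk k" "\<exists>j<k. j \<in> Sk k"
    "\<And>T. T \<in> R \<Longrightarrow> k \<in> T \<Longrightarrow> j < k \<Longrightarrow> j \<in> T \<Longrightarrow> T \<subseteq> Sk k \<Longrightarrow> T = Sk k"
proof -
  have fin: "finite (Gk k)" using finR by (simp add: Gk_def)
  have "{..<n} \<in> Gk k" using top k by (auto simp: Gk_def)
  hence ne: "Gk k \<noteq> {}" by blast
  have "\<exists>m\<in>Gk k. \<forall>b\<in>Gk k. b \<le> m \<longrightarrow> m = b" by (rule finite_has_minimal[OF fin ne])
  hence ex: "\<exists>S. S \<in> Gk k \<and> (\<forall>b\<in>Gk k. b \<subseteq> S \<longrightarrow> b = S)" by (metis (no_types, lifting))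
  have P: "Sk k \<in> Gk k \<and> (\<forall>b\<in>Gk k. b \<subseteq> Sk k \<longrightarrow> b = Sk k)"
    unfolding Sk_def by (rule someI_ex[OF ex])
  thus "Sk k \<in> R" "k \<in> Sk k" "\<exists>j<k. j \<in> Sk k" by (auto simp: Gk_def)
  fix T assume "T \<in> R" "k \<in> T" "j < k" "j \<in> T" "T \<subseteq> Sk k"
  thus "T = Sk k" using P by (auto simp: Gk_def)
qed

definition Cc :: "nat \<Rightarrow> nat set" where "Cc k = ch (Sk k) k"
definition low :: "nat \<Rightarrow> nat set \<Rightarrow> bool" where "low k X = (\<exists>j'\<in>X. j' < k)"
definition Aset :: "nat \<Rightarrow> nat set" where "Aset k = {j \<in> Sk k. low k (ch (Sk k) j)}"

definition v :: "nat \<Rightarrow> nat \<Rightarrow> rat" where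
  "v k j = (if k = 0 then 1 else if j \<in> Sk k then
     (if low k (ch (Sk k) j) then of_nat (card (Cc k))
      else if ch (Sk k) j = Cc k then - of_nat (card (Aset k)) else 0) else 0)"

context
  fixes k assumes k: "0 < k" "k < n"
begin

lemma SkR: "Sk k \<in> R" using Sk_prop[OF k] by simp
lemma kS: "k \<in> Sk k" using Sk_prop[OF k] by simp

lemma Cc_ge: "j \<in> Cc k \<Longrightarrow> k \<le> j"
proof (rule ccontr)
  assume j: "j \<in> Cc k" and "\<not> k \<le> j"
  hence jk: "j < k" by simp
  show False
  proof (cases "Cc k = {k}")
    case True thus False using j jk by simp
  next
    case False
    hence X: "Cc k \<in> R" "k \<in> Cc k" "Cc k \<subset> Sk k"
      using ch_cases[OF SkR, of k] unfolding Cc_def by auto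
    have "Cc k = Sk k" using Sk_prop(4)[OF k X(1) X(2) jk j] X(3) by auto
    thus False using X(3) by simp
  qed
qed

lemma not_low_Cc: "\<not> low k (Cc k)" using Cc_ge unfolding low_def by force

lemma ch_Cc_iff: "j \<in> Sk k \<Longrightarrow> ch (Sk k) j = Cc k \<longleftrightarrow> j \<in> Cc k"
  using ch_eq[OF SkR kS, of j] ch_mem[of j "Sk k"] unfolding Cc_def by auto

lemma Cc_sub: "Cc k \<subseteq> Sk k" using ch_sub[OF SkR kS] unfolding Cc_def by auto
lemma Aset_sub: "Aset k \<subseteq> Sk k" unfolding Aset_def by auto

lemma disj: "Aset k \<inter> Cc k = {}"
proof -
  { fix j assume j: "j \<in> Aset k" "j \<in> Cc k"
    hence "ch (Sk k) j = Cc k" using ch_Cc_iff Cc_sub by auto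
    hence False using j not_low_Cc unfolding Aset_def by auto }
  thus ?thesis by blast
qed

lemma Aset_ne: "Aset k \<noteq> {}"
proof -
  obtain j where "j < k" "j \<in> Sk k" using Sk_prop(3)[OF k] by blast
  hence "j \<in> Aset k" using ch_mem[of j "Sk k"] unfolding Aset_def low_def by blast
  thus ?thesis by blast
qed

lemma finS: "finite (Sk k)" using finT[OF SkR] .

lemma v_alt: "v k j = (if j \<in> Aset k then of_nat (card (Cc k)) else if j \<in> Cc k then - of_nat (card (Aset k)) else 0)"
proof -
  have "j \<in> Cc k \<Longrightarrow> j \<in> Sk k" using Cc_sub by auto
  thus ?thesis using k ch_Cc_iff[of j] unfolding v_def Aset_def by auto
qed

lemma v_out: "j \<notin> Sk k \<Longrightarrow> v k j = 0" using k unfolding v_def by simp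

lemma v_sum: "(\<Sum>j<n. v k j) = 0"
proof -
  have SA: "Aset k \<subseteq> {..<n}" and SC: "Cc k \<subseteq> {..<n}" using Aset_sub Cc_sub sub[OF SkR] by auto
  have fA: "finite (Aset k)" and fC: "finite (Cc k)" using finS Aset_sub Cc_sub finite_subset by blast+
  have "(\<Sum>j<n. v k j) = (\<Sum>j<n. (if j \<in> Aset k then of_nat (card (Cc k)) else 0) + (if j \<in> Cc k then - of_nat (card (Aset k)) else 0))"
    using disj by (intro sum.cong) (auto simp: v_alt)
  also have "\<dots> = (\<Sum>j<n. (if j \<in> Aset k then of_nat (card (Cc k)) else 0)) + (\<Sum>j<n. (if j \<in> Cc k then - of_nat (card (Aset k)) else 0))"
    by (rule sum.distrib)
  also have "(\<Sum>j<n. (if j \<in> Aset k then of_nat (card (Cc k)) else 0)) = (\<Sum>j\<in>{..<n} \<inter> Aset k. (of_nat (card (Cc k)) :: rat))"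
    by (rule sum.inter_restrict[symmetric]) simp
  also have "{..<n} \<inter> Aset k = Aset k" using SA by auto
  also have "(\<Sum>j<n. (if j \<in> Cc k then - of_nat (card (Aset k)) else 0)) = (\<Sum>j\<in>{..<n} \<inter> Cc k. (- of_nat (card (Aset k)) :: rat))"
    by (rule sum.inter_restrict[symmetric]) simp
  also have "{..<n} \<inter> Cc k = Cc k" using SC by auto
  finally show ?thesis by simp
qed

lemma v_kk: "v k k \<noteq> 0"
proof -
  have "k \<in> Cc k" unfolding Cc_def by (rule ch_mem)
  moreover have "k \<notin> Aset k" using disj \<open>k \<in> Cc k\<close> by auto
  moreover have "card (Aset k) \<noteq> 0" using Aset_ne finS Aset_sub finite_subset by (metis card_0_eq)
  ultimately show ?thesis by (simp add: v_alt)
qed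

lemma v_const_inner:
  assumes T: "T \<in> R" "T \<subset> Sk k"
  shows "\<exists>c. \<forall>j\<in>T. v k j = c"
proof (cases "T = {}")
  case True thus ?thesis by simp
next
  case False
  then obtain j0 where j0: "j0 \<in> T" by blast
  have "\<forall>j\<in>T. v k j = v k j0"
  proof
    fix j assume j: "j \<in> T"
    have "ch (Sk k) j = ch (Sk k) j0" using ch_const[OF SkR T j0 j] .
    moreover have "j \<in> Sk k" "j0 \<in> Sk k" using j j0 T by auto
    ultimately show "v k j = v k j0" unfolding v_def by simp
  qed
  thus ?thesis by blast
qed

end

lemma v_adapted:
  assumes T: "T \<in> R" and k: "k < n"
  shows "(\<exists>c. \<forall>j\<in>T. v k j = c) \<or> ((\<forall>j. j \<notin> T \<longrightarrow> v k j = 0) \<and> (\<Sum>j<n. v k j) = 0)"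
proof (cases "k = 0")
  case True thus ?thesis unfolding v_def by auto
next
  case False
  hence k': "0 < k" "k < n" using k by auto
  have "T \<inter> Sk k = {} \<or> T \<subseteq> Sk k \<or> Sk k \<subseteq> T" using lam[OF T SkR[OF k']] .
  moreover
  { assume "T \<inter> Sk k = {}"
    hence "\<forall>j\<in>T. v k j = 0" using v_out[OF k'] by blast
    hence ?thesis by blast }
  moreover
  { assume "T \<subseteq> Sk k" "T \<noteq> Sk k"
    hence ?thesis using v_const_inner[OF k' T] by auto }
  moreover
  { assume "Sk k \<subseteq> T"
    hence ?thesis using v_out[OF k'] v_sum[OF k'] by auto }
  ultimately show ?thesis by blast
qed

lemma v_eigen:
  assumes T: "T \<in> R" and k: "k < n"
  shows "\<exists>mu. \<forall>i<n. (\<Sum>j<n. A_mat n T $$ (i,j) * v k j) = mu * v k i"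
proof -
  have Tn: "T \<subseteq> {..<n}" using sub[OF T] .
  have fT: "finite T" using finT[OF T] .
  from v_adapted[OF T k] show ?thesis
  proof
    assume "\<exists>c. \<forall>j\<in>T. v k j = c"
    then obtain c where c: "\<forall>j\<in>T. v k j = c" by blast
    have "\<forall>i<n. (\<Sum>j<n. A_mat n T $$ (i,j) * v k j) = 0 * v k i"
    proof (intro allI impI)
      fix i assume i: "i < n"
      have "(\<Sum>j\<in>T. v k j) = of_nat (card T) * c" using c by simp
      thus "(\<Sum>j<n. A_mat n T $$ (i,j) * v k j) = 0 * v k i"
        using A_action[OF Tn i] c by simp
    qed
    thus ?thesis by blast
  next
    assume a: "(\<forall>j. j \<notin> T \<longrightarrow> v k j = 0) \<and> (\<Sum>j<n. v k j) = 0"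
    have "(\<Sum>j\<in>T. v k j) = (\<Sum>j<n. v k j)"
      using a Tn by (intro sum.mono_neutral_left) auto
    hence sT: "(\<Sum>j\<in>T. v k j) = 0" using a by simp
    have "\<forall>i<n. (\<Sum>j<n. A_mat n T $$ (i,j) * v k j) = of_nat (card T) * v k i"
      using A_action[OF Tn] sT a by auto
    thus ?thesis by blast
  qed
qed

lemma v_nz: "k < n \<Longrightarrow> (\<Sum>i<n. v k i * v k i) \<noteq> 0"
proof -
  assume k: "k < n"
  have "v k k \<noteq> 0"
    using v_kk[of k] k by (cases "k = 0") (auto simp: v_def)
  hence "0 < v k k * v k k" by (cases "v k k > 0") (auto simp: zero_less_mult_iff)
  also have "v k k * v k k \<le> (\<Sum>i<n. v k i * v k i)"
    using k by (intro member_le_sum) auto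
  finally show ?thesis by simp
qed

lemma v_orth_lt:
  assumes kl: "k < l" and l: "l < n"
  shows "(\<Sum>i<n. v k i * v l i) = 0"
proof (cases "k = 0")
  case True
  have "(\<Sum>i<n. v l i * v k i) = 0"
    using kl l True by (intro orth_aux[where c=1] v_sum) (auto simp: v_def)
  thus ?thesis by (simp add: mult.commute)
next
  case False
  hence k: "0 < k" "k < n" using kl l by auto
  have l': "0 < l" "l < n" using kl l by auto
  let ?S = "Sk k" and ?S' = "Sk l"
  have "?S \<inter> ?S' = {} \<or> ?S \<subseteq> ?S' \<or> ?S' \<subseteq> ?S" using lam[OF SkR[OF k] SkR[OF l']] .
  moreover
  { assume d: "?S \<inter> ?S' = {}"
    have ?thesis
    proof (rule orth_aux[OF v_sum[OF k], where c=0])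
      fix j assume "v k j \<noteq> 0"
      hence "j \<in> ?S" using v_out[OF k] by blast
      thus "v l j = 0" using d v_out[OF l'] by blast
    qed }
  moreover
  { assume e: "?S = ?S'"
    have ?thesis
    proof (rule orth_aux[OF v_sum[OF k], where c="of_nat (card (Cc l))"])
      fix j assume "v k j \<noteq> 0"
      hence jS: "j \<in> ?S" and dd: "low k (ch ?S j) \<or> ch ?S j = Cc k"
        using v_out[OF k] k unfolding v_def by (auto split: if_splits)
      from dd have "low l (ch ?S' j)"
      proof
        assume "low k (ch ?S j)"
        then obtain j' where "j' \<in> ch ?S j" "j' < k" unfolding low_def by blast
        thus ?thesis using kl e unfolding low_def by (intro bexI[of _ j']) auto
      next
        assume "ch ?S j = Cc k"
        hence "k \<in> ch ?S' j" using e unfolding Cc_def using ch_mem by metis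
        thus ?thesis using kl unfolding low_def by auto
      qed
      thus "v l j = of_nat (card (Cc l))" using jS e l' unfolding v_def by auto
    qed }
  moreover
  { assume s: "?S \<subseteq> ?S'" "?S \<noteq> ?S'"
    then obtain c where c: "\<forall>j\<in>?S. v l j = c" using v_const_inner[OF l' SkR[OF k]] by auto
    have ?thesis
    proof (rule orth_aux[OF v_sum[OF k], where c=c])
      fix j assume "v k j \<noteq> 0"
      hence "j \<in> ?S" using v_out[OF k] by blast
      thus "v l j = c" using c by blast
    qed }
  moreover
  { assume s: "?S' \<subseteq> ?S" "?S \<noteq> ?S'"
    then obtain c where c: "\<forall>j\<in>?S'. v k j = c" using v_const_inner[OF k SkR[OF l']] by auto
    have "(\<Sum>i<n. v l i * v k i) = 0"
    proof (rule orth_aux[OF v_sum[OF l'], where c=c])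
      fix j assume "v l j \<noteq> 0"
      hence "j \<in> ?S'" using v_out[OF l'] by blast
      thus "v k j = c" using c by blast
    qed
    hence ?thesis by (simp add: mult.commute) }
  ultimately show ?thesis by blast
qed

lemma v_orth: "k < n \<Longrightarrow> l < n \<Longrightarrow> k \<noteq> l \<Longrightarrow> (\<Sum>i<n. v k i * v l i) = 0"
proof -
  assume "k < n" "l < n" "k \<noteq> l"
  hence "k < l \<and> l < n \<or> l < k \<and> k < n" by auto
  thus ?thesis using v_orth_lt[of k l] v_orth_lt[of l k] by (auto simp: mult.commute)
qed

end


lemma A_magic: assumes T: "T \<subseteq> {..<n}" shows "magic_with_sum n (A_mat n T) 0"
proof -
  have fT: "finite T" using T finite_subset by blast
  have row: "(\<Sum>j<n. A_mat n T $$ (i,j)) = 0" if i: "i < n" for i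
    using A_action[OF T i, of "\<lambda>_. 1"] fT by simp
  have col: "(\<Sum>i<n. A_mat n T $$ (i,j)) = 0" if j: "j < n" for j
  proof -
    have "(\<Sum>i<n. A_mat n T $$ (i,j)) = (\<Sum>i<n. A_mat n T $$ (j,i))"
      using j by (intro sum.cong) auto
    thus ?thesis using row[OF j] by simp
  qed
  show ?thesis unfolding magic_with_sum_def using row col by simp
qed

lemma one_left: "i < n \<Longrightarrow> (\<Sum>l<n. (1\<^sub>m n :: rat mat) $$ (i,l) * F l) = F i"
proof -
  assume i: "i < n"
  have "(\<Sum>l<n. (1\<^sub>m n :: rat mat) $$ (i,l) * F l) = (\<Sum>l<n. if l = i then F l else 0)"
    using i by (intro sum.cong) auto
  thus ?thesis using i by simp
qed

lemma one_right: "j < n \<Longrightarrow> (\<Sum>l<n. F l * (1\<^sub>m n :: rat mat) $$ (l,j)) = F j"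
proof -
  assume j: "j < n"
  have "(\<Sum>l<n. F l * (1\<^sub>m n :: rat mat) $$ (l,j)) = (\<Sum>l<n. if l = j then F l else 0)"
    using j by (intro sum.cong) auto
  thus ?thesis using j by simp
qed

lemma sumK: "finite R \<Longrightarrow> (\<Sum>x\<in>insert None (Some ` R). F x) = F None + (\<Sum>T\<in>R. F (Some T))"
  by (subst sum.insert) (auto simp: sum.reindex)

definition gA :: "nat set \<Rightarrow> nat set \<Rightarrow> nat set \<Rightarrow> rat" where
  "gA T S U = (if T \<subseteq> S \<and> U = T then of_nat (card S) else if S \<subseteq> T \<and> U = S then of_nat (card T) else 0)"

lemma gA_sym: "gA T S U = gA S T U"
  unfolding gA_def by auto

definition g2 :: "nat set option \<Rightarrow> nat set option \<Rightarrow> nat set option \<Rightarrow> rat" where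
  "g2 x y z = (case x of None \<Rightarrow> (if z = y then 1 else 0)
     | Some T \<Rightarrow> (case y of None \<Rightarrow> (if z = x then 1 else 0)
        | Some S \<Rightarrow> (case z of None \<Rightarrow> 0 | Some U \<Rightarrow> gA T S U)))"

lemma g2_sym: "g2 x y z = g2 y x z"
  unfolding g2_def using gA_sym by (auto split: option.splits)

context sp begin

lemma sep: assumes T: "T \<in> R"
  shows "\<exists>i j. i \<in> T \<and> j \<in> T \<and> i \<noteq> j \<and> (\<forall>U\<in>R. (i \<in> U \<and> j \<in> U) \<longleftrightarrow> T \<subseteq> U)"
proof -
  have "T \<noteq> {}" using card2[OF T] by auto
  then obtain i where i: "i \<in> T" by blast
  have X: "ch T i \<subset> T" using ch_sub[OF T i] .
  then obtain j where j: "j \<in> T" "j \<notin> ch T i" by blast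
  have ij: "i \<noteq> j" using j ch_mem[of i T] by auto
  have "\<forall>U\<in>R. (i \<in> U \<and> j \<in> U) \<longleftrightarrow> T \<subseteq> U"
  proof
    fix U assume U: "U \<in> R"
    show "(i \<in> U \<and> j \<in> U) \<longleftrightarrow> T \<subseteq> U"
    proof
      assume a: "i \<in> U \<and> j \<in> U"
      hence "U \<subseteq> T \<or> T \<subseteq> U" using lam_int[OF U T, of i] i by blast
      moreover have "\<not> U \<subset> T"
      proof
        assume "U \<subset> T"
        hence "U \<subseteq> ch T i" using ch_max[OF U] a by blast
        thus False using a j by blast
      qed
      ultimately show "T \<subseteq> U" by blast
    next
      assume "T \<subseteq> U" thus "i \<in> U \<and> j \<in> U" using i j by blast
    qed
  qed
  thus ?thesis using i j ij by blast
qed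

lemma up_sum:
  assumes h: "\<And>i j. i < n \<Longrightarrow> j < n \<Longrightarrow> i \<noteq> j \<Longrightarrow> (\<Sum>T\<in>R. c T * A_mat n T $$ (i,j)) = 0"
  and T: "T \<in> R"
  shows "(\<Sum>U\<in>{U\<in>R. T \<subseteq> U}. c U) = 0"
proof -
  obtain i j where ij: "i \<in> T" "j \<in> T" "i \<noteq> j" and iff: "\<forall>U\<in>R. (i \<in> U \<and> j \<in> U) \<longleftrightarrow> T \<subseteq> U"
    using sep[OF T] by blast
  have i: "i < n" and j: "j < n" using ij sub[OF T] by auto
  have "0 = (\<Sum>U\<in>R. c U * A_mat n U $$ (i,j))" using h[OF i j ij(3)] by simp
  also have "\<dots> = (\<Sum>U\<in>R. if T \<subseteq> U then - c U else 0)"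
    using i j ij(3) iff by (intro sum.cong) auto
  also have "\<dots> = - (\<Sum>U\<in>{U\<in>R. T \<subseteq> U}. c U)"
    using finR by (simp add: sum.inter_filter sum_negf[symmetric] if_distrib[of uminus] cong: if_cong)
  finally show ?thesis by simp
qed

lemma indep:
  assumes h: "\<And>i j. i < n \<Longrightarrow> j < n \<Longrightarrow> i \<noteq> j \<Longrightarrow> (\<Sum>T\<in>R. c T * A_mat n T $$ (i,j)) = 0"
  shows "T \<in> R \<Longrightarrow> c T = 0"
proof (induction "n - card T" arbitrary: T rule: less_induct)
  case less
  have fin: "finite {U\<in>R. T \<subseteq> U}" using finR by simp
  have Tin: "T \<in> {U\<in>R. T \<subseteq> U}" using less.prems by simp
  have "0 = (\<Sum>U\<in>{U\<in>R. T \<subseteq> U}. c U)" using up_sum[OF h less.prems] by simp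
  also have "\<dots> = c T + (\<Sum>U\<in>{U\<in>R. T \<subseteq> U} - {T}. c U)"
    by (rule sum.remove[OF fin Tin])
  also have "(\<Sum>U\<in>{U\<in>R. T \<subseteq> U} - {T}. c U) = 0"
  proof (rule sum.neutral, rule ballI)
    fix U assume U: "U \<in> {U\<in>R. T \<subseteq> U} - {T}"
    hence UR: "U \<in> R" and TU: "T \<subset> U" by auto
    have "card T < card U" using psubset_card_mono[OF finT[OF UR] TU] .
    moreover have "card U \<le> n" using card_mono[OF _ sub[OF UR]] by simp
    ultimately have "n - card U < n - card T" by simp
    thus "c U = 0" using less.hyps UR by blast
  qed
  finally show ?case by simp
qed

lemma prodR:
  assumes T: "T \<in> R" and S: "S \<in> R" and i: "i < n" and j: "j < n"
  shows "(\<Sum>l<n. A_mat n T $$ (i,l) * A_mat n S $$ (l,j)) = (\<Sum>U\<in>R. gA T S U * A_mat n U $$ (i,j))"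
proof -
  have l: "T \<inter> S = {} \<or> T \<subseteq> S \<or> S \<subseteq> T" using lam[OF T S] .
  have "(\<Sum>U\<in>R. gA T S U * A_mat n U $$ (i,j)) =
     (if T \<subseteq> S then of_nat (card S) * A_mat n T $$ (i,j) else if S \<subseteq> T then of_nat (card T) * A_mat n S $$ (i,j) else 0)"
  proof (cases "T \<subseteq> S")
    case True
    have "(\<Sum>U\<in>R. gA T S U * A_mat n U $$ (i,j)) = (\<Sum>U\<in>R. if U = T then of_nat (card S) * A_mat n T $$ (i,j) else 0)"
      using True by (intro sum.cong) (auto simp: gA_def)
    thus ?thesis using True T finR by simp
  next
    case False
    show ?thesis
    proof (cases "S \<subseteq> T")
      case True
      have "(\<Sum>U\<in>R. gA T S U * A_mat n U $$ (i,j)) = (\<Sum>U\<in>R. if U = S then of_nat (card T) * A_mat n S $$ (i,j) else 0)"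
        using True False by (intro sum.cong) (auto simp: gA_def)
      thus ?thesis using True False S finR by simp
    next
      case False2: False
      have "(\<Sum>U\<in>R. gA T S U * A_mat n U $$ (i,j)) = 0"
        using False False2 by (intro sum.neutral) (auto simp: gA_def)
      thus ?thesis using False False2 by simp
    qed
  qed
  thus ?thesis using A_prod[OF sub[OF T] sub[OF S] i j l] by simp
qed

lemma diag_span:
  assumes "\<And>x k. x \<in> K \<Longrightarrow> k < n \<Longrightarrow> \<exists>mu. \<forall>i<n. (\<Sum>j<n. f x $$ (i,j) * v k j) = mu * v k i"
  shows "diagonalizable (lincomb n f K c)"
proof -
  define mu where "mu k x = (SOME m. \<forall>i<n. (\<Sum>j<n. f x $$ (i,j) * v k j) = m * v k i)" for k x
  have mu: "\<And>x k i. x \<in> K \<Longrightarrow> k < n \<Longrightarrow> i < n \<Longrightarrow> (\<Sum>j<n. f x $$ (i,j) * v k j) = mu k x * v k i"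
  proof -
    fix x k i assume x: "x \<in> K" and k: "k < n" and i: "i < n"
    have "\<forall>i<n. (\<Sum>j<n. f x $$ (i,j) * v k j) = mu k x * v k i"
      unfolding mu_def by (rule someI_ex[OF assms[OF x k]])
    thus "(\<Sum>j<n. f x $$ (i,j) * v k j) = mu k x * v k i" using i by blast
  qed
  show ?thesis
  proof (rule diag_from_orth[where v=v and lam="\<lambda>k. \<Sum>x\<in>K. c x * mu k x"])
    show "lincomb n f K c \<in> carrier_mat n n" by simp
    show "\<And>k l. k < n \<Longrightarrow> l < n \<Longrightarrow> k \<noteq> l \<Longrightarrow> (\<Sum>i<n. v k i * v l i) = 0" by (rule v_orth)
    show "\<And>k. k < n \<Longrightarrow> (\<Sum>i<n. v k i * v k i) \<noteq> 0" by (rule v_nz)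
    fix k i assume k: "k < n" and i: "i < n"
    show "(\<Sum>j<n. lincomb n f K c $$ (i,j) * v k j) = (\<Sum>x\<in>K. c x * mu k x) * v k i"
      by (rule lincomb_eigen[OF _ i]) (rule mu[OF _ k], auto)
  qed
qed

lemma part1:
  "lin_indep_mat n (A_mat n) R \<and>
          comm_subalgebra (span_mat n (A_mat n) R) \<and>
          (\<forall>M\<in>span_mat n (A_mat n) R.
              symmetric_mat M \<and> diagonalizable M \<and> magic_with_sum n M 0)"
proof (intro conjI ballI)
  show "lin_indep_mat n (A_mat n) R" unfolding lin_indep_mat_def
  proof (intro allI impI ballI)
    fix c T assume z: "lincomb n (A_mat n) R c = 0\<^sub>m n n" and T: "T \<in> R"
    have "\<And>i j. i < n \<Longrightarrow> j < n \<Longrightarrow> i \<noteq> j \<Longrightarrow> (\<Sum>T\<in>R. c T * A_mat n T $$ (i,j)) = 0"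
    proof -
      fix i j assume i: "i < n" and j: "j < n"
      have "lincomb n (A_mat n) R c $$ (i,j) = 0" using z i j by simp
      thus "(\<Sum>T\<in>R. c T * A_mat n T $$ (i,j)) = 0" using i j by simp
    qed
    thus "c T = 0" using indep T by blast
  qed
  show "comm_subalgebra (span_mat n (A_mat n) R)"
    by (rule lincomb_comm_subalgebra[OF finR prodR gA_sym])
  fix M assume "M \<in> span_mat n (A_mat n) R"
  then obtain c where M: "M = lincomb n (A_mat n) R c" unfolding span_mat_def by auto
  show "symmetric_mat M" unfolding M by (rule lincomb_symmetric) auto
  show "diagonalizable M" unfolding M by (rule diag_span) (rule v_eigen)
  have "magic_with_sum n M (\<Sum>T\<in>R. c T * 0)" unfolding M
    by (rule lincomb_magic) (rule A_magic[OF sub])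
  thus "magic_with_sum n M 0" by simp
qed

lemma part2:
  "lin_indep_mat n (I_or_A n) (insert None (Some ` R)) \<and>
          comm_subalgebra (span_mat n (I_or_A n) (insert None (Some ` R))) \<and>
          (\<forall>M\<in>span_mat n (I_or_A n) (insert None (Some ` R)).
              symmetric_mat M \<and> diagonalizable M \<and> magic n M)"
proof (intro conjI ballI)
  let ?K = "insert None (Some ` R)"
  have fK: "finite ?K" using finR by simp
  have ent: "lincomb n (I_or_A n) ?K c $$ (i,j) = c None * (if i = j then 1 else 0) + (\<Sum>T\<in>R. c (Some T) * A_mat n T $$ (i,j))"
    if "i < n" "j < n" for c i j
    using that by (simp add: sumK[OF finR] I_or_A_def)
  show "lin_indep_mat n (I_or_A n) ?K" unfolding lin_indep_mat_def
  proof (intro allI impI ballI)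
    fix c x assume z: "lincomb n (I_or_A n) ?K c = 0\<^sub>m n n" and x: "x \<in> ?K"
    have e0: "c None * (if i = j then 1 else 0) + (\<Sum>T\<in>R. c (Some T) * A_mat n T $$ (i,j)) = 0"
      if "i < n" "j < n" for i j
      using z that ent[OF that, of c] by (metis index_zero_mat(1))
    have h2: "(\<Sum>T\<in>R. c (Some T) * A_mat n T $$ (i,j)) = 0" if "i < n" "j < n" "i \<noteq> j" for i j
      using e0[of i j] that by simp
    have cS: "\<And>T. T \<in> R \<Longrightarrow> c (Some T) = 0" using indep[where c="\<lambda>T. c (Some T)", OF h2] by blast
    have "0 < n" using n2 by simp
    hence "c None = 0" using e0[of 0 0] cS by simp
    thus "c x = 0" using x cS by auto
  qed
  show "comm_subalgebra (span_mat n (I_or_A n) ?K)"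
  proof (rule lincomb_comm_subalgebra[OF fK _ g2_sym])
    fix x y i j assume x: "x \<in> ?K" and y: "y \<in> ?K" and i: "i < n" and j: "j < n"
    show "(\<Sum>l<n. I_or_A n x $$ (i,l) * I_or_A n y $$ (l,j)) = (\<Sum>z\<in>?K. g2 x y z * I_or_A n z $$ (i,j))"
    proof (cases x)
      case None
      have "(\<Sum>z\<in>?K. g2 x y z * I_or_A n z $$ (i,j)) = (\<Sum>z\<in>?K. if z = y then I_or_A n y $$ (i,j) else 0)"
        using None by (intro sum.cong) (auto simp: g2_def)
      also have "\<dots> = I_or_A n y $$ (i,j)" using y fK by simp
      finally show ?thesis using None one_left[OF i] by (simp add: I_or_A_def)
    next
      case (Some T)
      hence T: "T \<in> R" using x by auto
      show ?thesis
      proof (cases y)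
        case None
        have "(\<Sum>z\<in>?K. g2 x y z * I_or_A n z $$ (i,j)) = (\<Sum>z\<in>?K. if z = x then I_or_A n x $$ (i,j) else 0)"
          using None Some by (intro sum.cong) (auto simp: g2_def)
        also have "\<dots> = I_or_A n x $$ (i,j)" using x fK by simp
        finally show ?thesis using None Some one_right[OF j] by (simp add: I_or_A_def)
      next
        case (Some S)
        hence S: "S \<in> R" using y by auto
        have "(\<Sum>z\<in>?K. g2 x y z * I_or_A n z $$ (i,j)) = (\<Sum>U\<in>R. gA T S U * A_mat n U $$ (i,j))"
          using Some \<open>x = Some T\<close> by (simp add: sumK[OF finR] g2_def I_or_A_def)
        thus ?thesis using prodR[OF T S i j] Some \<open>x = Some T\<close> by (simp add: I_or_A_def)
      qed
    qed
  qed
  fix M assume "M \<in> span_mat n (I_or_A n) ?K"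
  then obtain c where M: "M = lincomb n (I_or_A n) ?K c" unfolding span_mat_def by auto
  show "symmetric_mat M" unfolding M by (rule lincomb_symmetric) (auto simp: I_or_A_def)
  show "diagonalizable M" unfolding M
  proof (rule diag_span)
    fix x k assume x: "x \<in> ?K" and k: "k < n"
    show "\<exists>mu. \<forall>i<n. (\<Sum>j<n. I_or_A n x $$ (i,j) * v k j) = mu * v k i"
    proof (cases x)
      case None
      thus ?thesis using one_left by (auto simp: I_or_A_def)
    next
      case (Some T)
      thus ?thesis using v_eigen[OF _ k] x by (auto simp: I_or_A_def)
    qed
  qed
  have "magic_with_sum n M (\<Sum>x\<in>?K. c x * (case x of None \<Rightarrow> 1 | Some _ \<Rightarrow> 0))" unfolding M
  proof (rule lincomb_magic)
    fix x assume x: "x \<in> ?K"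
    show "magic_with_sum n (I_or_A n x) (case x of None \<Rightarrow> 1 | Some _ \<Rightarrow> 0)"
    proof (cases x)
      case None
      have "(\<Sum>j<n. (1\<^sub>m n :: rat mat) $$ (i,j)) = 1" if "i < n" for i
        using one_left[OF that, of "\<lambda>_. 1"] by simp
      moreover have "(\<Sum>i<n. (1\<^sub>m n :: rat mat) $$ (i,j)) = 1" if "j < n" for j
        using one_right[OF that, of "\<lambda>_. 1"] by simp
      ultimately show ?thesis using None by (simp add: I_or_A_def magic_with_sum_def)
    next
      case (Some T)
      thus ?thesis using x A_magic[OF sub] by (auto simp: I_or_A_def)
    qed
  qed
  thus "magic n M" unfolding magic_def by blast
qed

end

theorem mainTheorem7:
  fixes n :: nat and R :: "nat set set"
  assumes "species_of_tree n R"
  shows "(lin_indep_mat n (A_mat n) R \<and>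
          comm_subalgebra (span_mat n (A_mat n) R) \<and>
          (\<forall>M\<in>span_mat n (A_mat n) R.
              symmetric_mat M \<and> diagonalizable M \<and> magic_with_sum n M 0))
       \<and> (lin_indep_mat n (I_or_A n) (insert None (Some ` R)) \<and>
          comm_subalgebra (span_mat n (I_or_A n) (insert None (Some ` R))) \<and>
          (\<forall>M\<in>span_mat n (I_or_A n) (insert None (Some ` R)).
              symmetric_mat M \<and> diagonalizable M \<and> magic n M))"
proof -
  interpret sp n R by unfold_locales (rule assms)
  show ?thesis using part1 part2 by blast
qed


end
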